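(* Let $\pi_1, \ldots, \pi_k \geqslant 3$ be pairwise distinct integers. Then $\prod_{i=1}^k (2^{\pi_i}-2) \geqslant \frac{1}{2} \prod_{i=1}^k 2^{\pi_i}$. *)

theory Defs
  imports Complex_Main
begin

end

theory Submission
  imports Defs
begin

lemma weier:
  fixes x :: "nat \<Rightarrow> real"
  assumes "finite A" "\<And>a. a \<in> A \<Longrightarrow> 0 \<le> x a \<and> x a \<le> 1"
  shows "(\<Prod>a\<in>A. 1 - x a) \<ge> 1 - (\<Sum>a\<in>A. x a)"
  using assms
proof (induction A rule: finite_induct)
  case empty then show ?case by simp
next
  case (insert b F)
  let ?P = "\<Prod>a\<in>F. 1 - x a" and ?s = "\<Sum>a\<in>F. x a"
  have IH: "?P \<ge> 1 - ?s" using insert by auto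
  have xb: "0 \<le> x b" "x b \<le> 1" using insert by auto
  have s0: "?s \<ge> 0" using insert by (auto intro: sum_nonneg)
  have "(1 - x b) * ?P \<ge> (1 - x b) * (1 - ?s)"
    using IH xb by (intro mult_left_mono) auto
  moreover have "(1 - x b) * (1 - ?s) \<ge> 1 - (x b + ?s)" using xb s0
    by (simp add: algebra_simps)
  ultimately show ?case using insert by simp
qed

lemma geo: "(\<Sum>m\<in>{3..<N+3}. (1/2::real)^m) = 1/4 - (1/2)^(N+2)"
proof (induction N)
  case 0 then show ?case by (simp add: power_one_over)
next
  case (Suc N)
  have "{3..<Suc N + 3} = insert (N+3) {3..<N+3}" by auto
  then have "(\<Sum>m\<in>{3..<Suc N+3}. (1/2::real)^m) = (1/2)^(N+3) + (1/4 - (1/2)^(N+2))"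
    using Suc by simp
  also have "\<dots> = 1/4 - (1/2)^(Suc N+2)"
  proof -
    have a: "(1/2::real)^(N+3) = (1/2)^N/8" by (simp add: power_add eval_nat_numeral)
    have b: "(1/2::real)^(N+2) = (1/2)^N/4" by (simp add: power_add eval_nat_numeral)
    have c: "(1/2::real)^(Suc N+2) = (1/2)^N/8" by (simp add: power_add eval_nat_numeral)
    show ?thesis unfolding a b c by simp
  qed
  finally show ?case .
qed

lemma sumbound:
  assumes "finite S" "\<And>m. m \<in> S \<Longrightarrow> (m::nat) \<ge> 3"
  shows "(\<Sum>m\<in>S. (1/2::real)^m) \<le> 1/4"
proof -
  obtain N where N0: "\<forall>n\<in>S. n < N" using assms(1) unfolding finite_nat_set_iff_bounded by (elim exE) simp
  have N: "S \<subseteq> {..<N}" using N0 by auto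
  have "S \<subseteq> {3..<N+3}" using N assms(2) by auto
  then have "(\<Sum>m\<in>S. (1/2::real)^m) \<le> (\<Sum>m\<in>{3..<N+3}. (1/2::real)^m)"
    by (intro sum_mono2) auto
  also have "\<dots> \<le> 1/4" unfolding geo by simp
  finally show ?thesis .
qed

theorem lemma7:
  fixes k :: nat and \<pi> :: "nat \<Rightarrow> nat"
  assumes ge3: "\<And>i. i \<in> {1..k} \<Longrightarrow> \<pi> i \<ge> 3"
    and distinct: "inj_on \<pi> {1..k}"
  shows "(\<Prod>i=1..k. (2::real) ^ \<pi> i - 2) \<ge> (1/2) * (\<Prod>i=1..k. (2::real) ^ \<pi> i)"
proof -
  let ?S = "\<pi> ` {1..k}"
  define x where "x m = 2 * (1/2::real)^m" for m :: nat
  have eq: "(2::real) ^ \<pi> i - 2 = 2 ^ \<pi> i * (1 - x (\<pi> i))" for i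
    unfolding x_def power_one_over by (simp add: right_diff_distrib)
  have p1: "(\<Prod>i=1..k. (2::real) ^ \<pi> i - 2) = (\<Prod>i=1..k. (2::real) ^ \<pi> i) * (\<Prod>i=1..k. 1 - x (\<pi> i))"
    unfolding eq by (simp add: prod.distrib)
  have p2: "(\<Prod>i=1..k. 1 - x (\<pi> i)) = (\<Prod>m\<in>?S. 1 - x m)"
    using prod.reindex[OF distinct, of "\<lambda>m. 1 - x m"] by simp
  have xr: "0 \<le> x m \<and> x m \<le> 1" if "m \<in> ?S" for m
  proof -
    have "m \<ge> 3" using that ge3 by auto
    have "(1/2::real)^m \<le> (1/2)^1" by (rule power_decreasing) (use \<open>m \<ge> 3\<close> in simp_all)
    then show ?thesis by (simp add: x_def)
  qed
  have "(\<Prod>m\<in>?S. 1 - x m) \<ge> 1 - (\<Sum>m\<in>?S. x m)" by (rule weier) (use xr in auto)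
  moreover have "(\<Sum>m\<in>?S. x m) \<le> 1/2"
  proof -
    have "(\<Sum>m\<in>?S. (1/2::real)^m) \<le> 1/4" by (rule sumbound) (use ge3 in auto)
    then show ?thesis by (simp add: x_def sum_distrib_left[symmetric])
  qed
  ultimately have q: "(\<Prod>i=1..k. 1 - x (\<pi> i)) \<ge> 1/2" using p2 by linarith
  have pos: "(\<Prod>i=1..k. (2::real) ^ \<pi> i) \<ge> 0" by (intro prod_nonneg) auto
  have "(\<Prod>i=1..k. (2::real) ^ \<pi> i) * (1/2) \<le> (\<Prod>i=1..k. (2::real) ^ \<pi> i) * (\<Prod>i=1..k. 1 - x (\<pi> i))"
    by (rule mult_left_mono[OF q pos])
  then show ?thesis unfolding p1 by linarith
qed

end
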